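(* Let $\sigma_0,\sigma_\epsilon>0$, $\theta_0\in\mathbb{R}$, prior $\Theta\sim N(\theta_0,\sigma_0^2)$, signal $X=\Theta+\epsilon$ with $\epsilon\sim\mathrm{Laplace}(0,\sigma_\epsilon)$ independent of $\Theta$, and let $\theta_1(x)=\mathbb{E}[\Theta\mid X=x]$. Then for large signals the shift is asymptotically constant: $\theta_1(x)-\theta_0\approx\operatorname{sgn}(x-\theta_0)\frac{\sigma_0^2}{\sigma_\epsilon}$, i.e. $$\lim_{x\to+\infty}(\theta_1(x)-\theta_0)=\frac{\sigma_0^2}{\sigma_\epsilon},\qquad \lim_{x\to-\infty}(\theta_1(x)-\theta_0)=-\frac{\sigma_0^2}{\sigma_\epsilon}.$$
   Context: $\mathrm{Laplace}(\mu,s)$ has density $t\mapsto\frac{1}{2s}e^{-|t-\mu|/s}$. The posterior mean is $\theta_1(x)=\frac{\int\theta f_\Theta(\theta)l_\epsilon(x-\theta)d\theta}{\int f_\Theta(\theta)l_\epsilon(x-\theta)d\theta}$. *)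

theory Defs
  imports "HOL-Probability.Probability"
begin

definition laplace_density :: "real \<Rightarrow> real \<Rightarrow> real \<Rightarrow> real" where
  "laplace_density \<mu> s t = 1 / (2 * s) * exp (- \<bar>t - \<mu>\<bar> / s)"

definition posterior_mean :: "(real \<Rightarrow> real) \<Rightarrow> (real \<Rightarrow> real) \<Rightarrow> real \<Rightarrow> real" where
  "posterior_mean f l x =
     (\<integral>\<theta>. \<theta> * f \<theta> * l (x - \<theta>) \<partial>lborel) / (\<integral>\<theta>. f \<theta> * l (x - \<theta>) \<partial>lborel)"

end

theory Submission
  imports Defs
begin

lemma shift_normal:
  fixes c s b \<mu> \<theta> :: real
  assumes c2: "c^2 = 1" and s: "s > 0" and b: "b > 0"
  shows "normal_density \<mu> s \<theta> * exp (c*\<theta>/b) =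
         exp (c*\<mu>/b + s^2/(2*b^2)) * normal_density (\<mu> + c * s^2/b) s \<theta>"
proof -
  have e: "-((\<theta>-\<mu>)^2)/(2* s^2) + c*\<theta>/b = (c*\<mu>/b + s^2/(2*b^2)) + (-((\<theta> - (\<mu> + c * s^2/b))^2)/(2* s^2))"
  proof -
    have "c^2 * s^2 = s^2" using c2 by simp
    then show ?thesis using s b
      by (simp add: field_simps power2_eq_square)
  qed
  show ?thesis
  proof -
    have x: "exp (-((\<theta>-\<mu>)^2)/(2* s^2)) * exp (c*\<theta>/b) = exp (c*\<mu>/b + s^2/(2*b^2)) * exp (-((\<theta> - (\<mu> + c * s^2/b))^2)/(2* s^2))"
      by (simp only: exp_add[symmetric] e)
    show ?thesis unfolding normal_density_def using x by (simp add: mult_ac)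
  qed
qed

lemma core:
  fixes g :: "real \<Rightarrow> real" and c s b \<mu> :: real
  assumes c: "c = 1 \<or> c = -1" and s: "s > 0" and b: "b > 0"
    and gm: "g \<in> borel_measurable borel"
    and gi: "\<And>\<nu>. integrable lborel (\<lambda>\<theta>. g \<theta> * normal_density \<nu> s \<theta>)"
  shows "((\<lambda>t. exp (t/b) * (\<integral>\<theta>. g \<theta> * normal_density \<mu> s \<theta> * laplace_density 0 b (c*t - \<theta>) \<partial>lborel))
     \<longlongrightarrow> (1/(2*b)) * exp (c*\<mu>/b + s^2/(2*b^2)) *
          (\<integral>\<theta>. g \<theta> * normal_density (\<mu> + c * s^2/b) s \<theta> \<partial>lborel)) at_top"
proof -
  have c2: "c^2 = 1" using c by auto
  let ?f = "\<lambda>\<theta>. g \<theta> * normal_density \<mu> s \<theta> * (1/(2*b) * exp (c*\<theta>/b))"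
  let ?s = "\<lambda>t \<theta>. exp (t/b) * (g \<theta> * normal_density \<mu> s \<theta> * laplace_density 0 b (c*t - \<theta>))"
  have eq: "?f = (\<lambda>\<theta>. (1/(2*b)) * exp (c*\<mu>/b + s^2/(2*b^2)) * (g \<theta> * normal_density (\<mu> + c * s^2/b) s \<theta>))"
  proof
    fix \<theta>
    show "?f \<theta> = (1/(2*b)) * exp (c*\<mu>/b + s^2/(2*b^2)) * (g \<theta> * normal_density (\<mu> + c * s^2/b) s \<theta>)"
      using shift_normal[OF c2 s b, of \<mu> \<theta>]
      by (metis (no_types, lifting) mult.assoc mult.left_commute)
  qed
  have fi: "integrable lborel ?f" unfolding eq by (intro integrable_mult_right gi)
  have lim: "((\<lambda>t. integral\<^sup>L lborel (?s t)) \<longlongrightarrow> integral\<^sup>L lborel ?f) at_top"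
  proof (rule integral_dominated_convergence_at_top[where w = "\<lambda>\<theta>. \<bar>?f \<theta>\<bar>"])
    show "?f \<in> borel_measurable lborel" using fi by auto
    show "?s t \<in> borel_measurable lborel" for t
      using gm unfolding laplace_density_def by measurable
    show "integrable lborel (\<lambda>\<theta>. \<bar>?f \<theta>\<bar>)" using fi by (rule integrable_abs)
    show "AE \<theta> in lborel. ((\<lambda>t. ?s t \<theta>) \<longlongrightarrow> ?f \<theta>) at_top"
    proof (rule AE_I2)
      fix \<theta>
      have "eventually (\<lambda>t. ?s t \<theta> = ?f \<theta>) at_top"
        using eventually_ge_at_top[of "c*\<theta>"]
      proof eventually_elim
        case (elim t)
        have a: "\<bar>c*t - \<theta> - 0\<bar> = t - c*\<theta>" using c elim by auto
        have "exp (t/b) * exp (- \<bar>c*t - \<theta> - 0\<bar> / b) = exp (c*\<theta>/b)"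
          unfolding a exp_add[symmetric] using b by (simp add: field_simps)
        then show ?case unfolding laplace_density_def
          by (metis (no_types, lifting) mult.assoc mult.left_commute)
      qed
      then show "((\<lambda>t. ?s t \<theta>) \<longlongrightarrow> ?f \<theta>) at_top" by (rule tendsto_eventually)
    qed
    show "\<forall>\<^sub>F t in at_top. AE \<theta> in lborel. norm (?s t \<theta>) \<le> \<bar>?f \<theta>\<bar>"
    proof (intro always_eventually allI AE_I2)
      fix t \<theta>
      have a: "t - \<bar>c*t - \<theta> - 0\<bar> \<le> c*\<theta>" using c by auto
      have le: "exp (t/b) * exp (- \<bar>c*t - \<theta> - 0\<bar> / b) \<le> exp (c*\<theta>/b)"
        unfolding exp_add[symmetric] using a b by (simp add: diff_divide_distrib[symmetric] divide_right_mono)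
      have "norm (?s t \<theta>) = \<bar>g \<theta>\<bar> * normal_density \<mu> s \<theta> * (1/(2*b)) * (exp (t/b) * exp (- \<bar>c*t - \<theta> - 0\<bar> / b))"
        unfolding laplace_density_def using b by (simp add: abs_mult)
      also have "\<dots> \<le> \<bar>g \<theta>\<bar> * normal_density \<mu> s \<theta> * (1/(2*b)) * exp (c*\<theta>/b)"
        by (intro mult_left_mono le) (use b in auto)
      also have "\<dots> = \<bar>?f \<theta>\<bar>" using b by (simp add: abs_mult)
      finally show "norm (?s t \<theta>) \<le> \<bar>?f \<theta>\<bar>" .
    qed
  qed
  have "integral\<^sup>L lborel ?f = (1/(2*b)) * exp (c*\<mu>/b + s^2/(2*b^2)) *
          (\<integral>\<theta>. g \<theta> * normal_density (\<mu> + c * s^2/b) s \<theta> \<partial>lborel)"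
    unfolding eq by simp
  with lim b show ?thesis by simp
qed

lemma main_c:
  fixes c s b \<mu> :: real
  assumes c: "c = 1 \<or> c = -1" and s: "s > 0" and b: "b > 0"
  shows "((\<lambda>t. posterior_mean (normal_density \<mu> s) (laplace_density 0 b) (c*t) - \<mu>) \<longlongrightarrow> c * (s^2/b)) at_top"
proof -
  define K where "K = (1/(2*b)) * exp (c*\<mu>/b + s^2/(2*b^2))"
  have K: "K > 0" unfolding K_def using b by simp
  have N: "((\<lambda>t. exp (t/b) * (\<integral>\<theta>. \<theta> * normal_density \<mu> s \<theta> * laplace_density 0 b (c*t - \<theta>) \<partial>lborel))
     \<longlongrightarrow> K * (\<mu> + c * s^2/b)) at_top"
  proof -
    have gi: "\<And>\<nu>. integrable lborel (\<lambda>\<theta>. \<theta> * normal_density \<nu> s \<theta>)"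
      using integrable_normal_moment_nz_1 s by (simp add: mult_ac)
    have gv: "\<And>\<nu>. (\<integral>\<theta>. \<theta> * normal_density \<nu> s \<theta> \<partial>lborel) = \<nu>"
      using integral_normal_moment_nz_1 s by (simp add: mult_ac)
    show ?thesis
      using core[OF c s b _ gi, of \<mu>] by (simp add: K_def gv)
  qed
  have D: "((\<lambda>t. exp (t/b) * (\<integral>\<theta>. normal_density \<mu> s \<theta> * laplace_density 0 b (c*t - \<theta>) \<partial>lborel))
     \<longlongrightarrow> K) at_top"
  proof -
    have gi1: "\<And>\<nu>. integrable lborel (\<lambda>\<theta>. 1 * normal_density \<nu> s \<theta>)"
      using integrable_normal_density s by auto
    have one: "integral\<^sup>L lborel (normal_density (\<mu> + c * s^2/b) s) = 1"
      using integral_normal_density s by auto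
    show ?thesis using core[OF c s b _ gi1, of \<mu>] by (simp add: K_def one)
  qed
  have Q: "((\<lambda>t. (exp (t/b) * (\<integral>\<theta>. \<theta> * normal_density \<mu> s \<theta> * laplace_density 0 b (c*t - \<theta>) \<partial>lborel)) /
        (exp (t/b) * (\<integral>\<theta>. normal_density \<mu> s \<theta> * laplace_density 0 b (c*t - \<theta>) \<partial>lborel)) - \<mu>)
     \<longlongrightarrow> K * (\<mu> + c * s^2/b) / K - \<mu>) at_top"
    by (intro tendsto_intros N D) (use K in auto)
  have e1: "K * (\<mu> + c * s^2/b) / K - \<mu> = c * (s^2/b)" using K by simp
  show ?thesis
    using Q unfolding e1 posterior_mean_def by simp
qed

theorem mainTheorem16:
  fixes \<sigma>\<^sub>0 \<sigma>\<^sub>\<epsilon> \<theta>\<^sub>0 :: real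
  assumes "\<sigma>\<^sub>0 > 0" and "\<sigma>\<^sub>\<epsilon> > 0"
  defines "\<theta>\<^sub>1 \<equiv> posterior_mean (normal_density \<theta>\<^sub>0 \<sigma>\<^sub>0) (laplace_density 0 \<sigma>\<^sub>\<epsilon>)"
  shows "((\<lambda>x. \<theta>\<^sub>1 x - \<theta>\<^sub>0) \<longlongrightarrow> \<sigma>\<^sub>0\<^sup>2 / \<sigma>\<^sub>\<epsilon>) at_top \<and>
         ((\<lambda>x. \<theta>\<^sub>1 x - \<theta>\<^sub>0) \<longlongrightarrow> - (\<sigma>\<^sub>0\<^sup>2 / \<sigma>\<^sub>\<epsilon>)) at_bot"
proof
  show "((\<lambda>x. \<theta>\<^sub>1 x - \<theta>\<^sub>0) \<longlongrightarrow> \<sigma>\<^sub>0\<^sup>2 / \<sigma>\<^sub>\<epsilon>) at_top"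
    using main_c[of 1 \<sigma>\<^sub>0 \<sigma>\<^sub>\<epsilon> \<theta>\<^sub>0] assms unfolding \<theta>\<^sub>1_def by simp
  show "((\<lambda>x. \<theta>\<^sub>1 x - \<theta>\<^sub>0) \<longlongrightarrow> - (\<sigma>\<^sub>0\<^sup>2 / \<sigma>\<^sub>\<epsilon>)) at_bot"
    unfolding filterlim_at_bot_mirror
    using main_c[of "-1" \<sigma>\<^sub>0 \<sigma>\<^sub>\<epsilon> \<theta>\<^sub>0] assms unfolding \<theta>\<^sub>1_def by simp
qed

end
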